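(* Let $q$ be a power of $2$. Let $b\in\mathbb{F}_q^*$ and $\delta\in\mathbb{F}_{q^2}$ with $b\,\mathrm{Tr}_{q^2/q}(\delta)=1$. Then the compositional inverse of $$P(x)=b(x^q+x+\delta)^{\frac{q^2+q}{2}+1}+x$$ over $\mathbb{F}_{q^2}$ is $$P^{-1}(x)=x+b\left(\mathrm{Tr}_{q^2/q}(\delta)^{-1}(x^q+x)^2+\mathrm{Tr}_{q^2/q}(\delta)^{-1}\delta^{q+1}+\delta\right)^{1+(q^2+q)/2}.$$
   Context: $\mathrm{Tr}_{q^2/q}(y)=y+y^q$. The compositional inverse of a permutation polynomial $f$ of $\mathbb{F}_{Q}$ is the unique polynomial $f^{-1}$ (modulo $x^Q-x$) with $f(f^{-1}(c))=f^{-1}(f(c))=c$ for all $c\in\mathbb{F}_Q$; in particular the statement includes that $P$ permutes $\mathbb{F}_{q^2}$. *)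

theory Defs
  imports Main
begin

text \<open>Relative trace from F_{q^2} to F_q, on a field type of cardinality q^2.\<close>
definition tr2 :: "nat \<Rightarrow> 'a::field \<Rightarrow> 'a" where
  "tr2 q y = y + y ^ q"

end

theory Submission
  imports Defs
begin

lemma fermat_fin:
  fixes x :: "'a::{field,finite}"
  assumes "x \<noteq> 0"
  shows "x ^ (card (UNIV::'a set) - 1) = 1"
proof -
  let ?A = "UNIV - {0::'a}"
  have inj: "inj_on (\<lambda>y. x*y) ?A" using assms by (auto intro: inj_onI)
  have img: "(\<lambda>y. x*y) ` ?A = ?A"
  proof
    show "(\<lambda>y. x*y) ` ?A \<subseteq> ?A" using assms by auto
    show "?A \<subseteq> (\<lambda>y. x*y) ` ?A"
    proof
      fix z assume "z \<in> ?A"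
      then have "z = x * (z/x)" "z/x \<in> ?A" using assms by auto
      then show "z \<in> (\<lambda>y. x*y) ` ?A" by blast
    qed
  qed
  have "prod id ?A = prod id ((\<lambda>y. x*y) ` ?A)" using img by simp
  also have "\<dots> = prod (\<lambda>y. x*y) ?A" using prod.reindex[OF inj] by simp
  also have "\<dots> = x ^ card ?A * prod id ?A" by (simp add: prod.distrib)
  finally have e: "prod id ?A = x ^ card ?A * prod id ?A" .
  have "prod id ?A \<noteq> 0" by (simp add: prod_zero_iff)
  with e have "x ^ card ?A = 1" by simp
  moreover have "card ?A = card (UNIV::'a set) - 1" by (simp add: card_Diff_singleton)
  ultimately show ?thesis by simp
qed

lemma frob2:
  assumes "(2::'a::comm_ring_1) = 0"
  shows "((a::'a)+b)^(2^j) = a^(2^j) + b^(2^j)"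
proof (induction j)
  case 0 then show ?case by simp
next
  case (Suc j)
  have "(a+b)^(2^Suc j) = ((a+b)^(2^j))^2" by (simp add: power_mult[symmetric] mult.commute)
  also have "\<dots> = (a^(2^j))^2 + (b^(2^j))^2" using Suc assms by (simp add: power2_sum)
  also have "\<dots> = a^(2^Suc j) + b^(2^Suc j)" by (simp add: power_mult[symmetric] mult.commute)
  finally show ?case .
qed

theorem theorem3p4:
  fixes q k :: nat and b \<delta> :: "'a::{field,finite}"
    and P Pinv :: "'a \<Rightarrow> 'a"
  assumes q_pow: "q = 2 ^ k"
    and card: "card (UNIV :: 'a set) = q ^ 2"
    and b_Fq: "b ^ q = b" and b_nz: "b \<noteq> 0"
    and tr_cond: "b * tr2 q \<delta> = 1"
    and P_def: "\<And>x. P x = b * (x ^ q + x + \<delta>) ^ ((q ^ 2 + q) div 2 + 1) + x"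
    and Pinv_def: "\<And>x. Pinv x = x + b * (inverse (tr2 q \<delta>) * (x ^ q + x) ^ 2
                     + inverse (tr2 q \<delta>) * \<delta> ^ (q + 1) + \<delta>) ^ (1 + (q ^ 2 + q) div 2)"
  shows "bij P \<and> (\<forall>c. P (Pinv c) = c) \<and> (\<forall>c. Pinv (P c) = c)"
proof -
  have k0: "k \<noteq> 0"
  proof
    assume "k = 0"
    then have "card (UNIV :: 'a set) = 1" using card q_pow by simp
    then obtain z where "(UNIV :: 'a set) = {z}" using card_1_singletonE by blast
    then have "(0::'a) = 1" by (metis UNIV_I singletonD)
    then show False by simp
  qed
  define h where "h = k - 1"
  have qh: "q = 2 * 2^h" using k0 q_pow h_def by (cases k) auto
  have even_card: "even (card (UNIV :: 'a set))" using card qh by simp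
  have cpos: "card (UNIV :: 'a set) > 0" by (simp add: finite_UNIV_card_ge_0)
  have two: "(2::'a) = 0"
  proof -
    have "(-1::'a) ^ (card (UNIV::'a set) - 1) = 1" by (rule fermat_fin) simp
    moreover have "odd (card (UNIV::'a set) - 1)" using even_card cpos by simp
    ultimately have "(-1::'a) = 1" by simp
    then show ?thesis by (metis one_add_one neg_eq_iff_add_eq_0)
  qed
  have frob: "\<And>a c::'a. (a + c)^q = a^q + c^q" using frob2[OF two] q_pow by simp
  have fix2: "\<And>y::'a. y^(q^2) = y"
  proof -
    fix y :: 'a
    show "y^(q^2) = y"
    proof (cases "y = 0")
      case True then show ?thesis using qh by simp
    next
      case False
      have "y^(q^2) = y^(q^2 - 1) * y" using cpos card
        by (metis power_minus_mult)
      then show ?thesis using fermat_fin[OF False] card by simp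
    qed
  qed
  have fixq: "\<And>y::'a. (y^q)^q = y" using fix2 by (simp add: power_mult[symmetric] power2_eq_square)
  define t where "t = tr2 q \<delta>"
  have t_def': "t = \<delta> + \<delta>^q" by (simp add: t_def tr2_def)
  have bt: "b * t = 1" using tr_cond t_def by simp
  have tnz: "t \<noteq> 0" using bt by auto
  define m where "m = (q ^ 2 + q) div 2"
  have m_eq: "m = 2^h * (q+1)" using qh by (simp add: m_def power2_eq_square algebra_simps)
  have frob3: "\<And>a c d::'a. (a + c + d)^q = a^q + c^q + d^q" using frob by simp
  have frobm: "\<And>a c::'a. (a * c)^q = a^q * c^q" by (simp add: power_mult_distrib)
  have key: "Pinv (P x) = x" for x
  proof -
    define T where "T = x^q + x"
    have Tq: "T^q = T" using frob fixq by (simp add: T_def add.commute)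
    define u where "u = T + \<delta>"
    have uq: "u^q = T + \<delta>^q" using frob Tq by (simp add: u_def)
    define N where "N = u^q * u"
    have Nq: "N^q = N" using fixq by (simp add: N_def frobm mult.commute)
    define s where "s = N^(2^h)"
    have s2: "s^2 = N" using Nq qh by (simp add: s_def power_mult[symmetric] mult.commute)
    have sq: "s^q = s"
    proof -
      have "s^q = (N^q)^(2^h)" by (simp add: s_def power_mult[symmetric] mult.commute)
      then show ?thesis using Nq by (simp add: s_def)
    qed
    have um: "u^(m+1) = s * u"
    proof -
      have "u^(m+1) = (u^(q+1))^(2^h) * u"
      proof -
        have "m+1 = (q+1)*2^h + 1" by (simp add: m_eq)
        then show ?thesis by (metis power_add power_one_right power_mult)
      qed
      also have "u^(q+1) = N" by (simp add: N_def mult.commute)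
      finally show ?thesis by (simp add: s_def)
    qed
    define y where "y = P x"
    have y_eq: "y = b * s * u + x" using um by (simp add: y_def P_def m_def[symmetric] u_def T_def add.assoc)
    have yq: "y^q = b * s * u^q + x^q"
    proof -
      have "y^q = (b * s * u)^q + x^q" by (simp add: y_eq frob)
      also have "(b * s * u)^q = b^q * s^q * u^q" by (simp add: power_mult_distrib)
      finally show ?thesis using b_Fq sq by simp
    qed
    have tr_y: "y^q + y = s + T"
    proof -
      have "y^q + y = b * s * (u^q + u) + T" unfolding yq by (simp add: y_eq T_def algebra_simps)
      also have "u^q + u = t + 2 * T" unfolding uq by (simp add: u_def t_def' algebra_simps)
      finally show ?thesis using two bt by (simp add: algebra_simps)
    qed
    have N_eq: "N = T^2 + t * T + \<delta>^(q+1)"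
      unfolding N_def uq by (simp add: u_def t_def' algebra_simps power2_eq_square)
    have sqr: "(y^q + y)^2 = t * T + \<delta>^(q+1)"
    proof -
      have "(y^q + y)^2 = s^2 + T^2 + 2 * s * T" by (simp add: tr_y power2_sum)
      also have "\<dots> = t * T + \<delta>^(q+1) + 2 * T^2" using s2 N_eq two by (simp add: algebra_simps)
      finally show ?thesis using two by simp
    qed
    have w: "inverse t * (y^q + y)^2 + inverse t * \<delta>^(q+1) + \<delta> = u"
    proof -
      have "inverse t * (y^q + y)^2 + inverse t * \<delta>^(q+1) + \<delta>
          = T + 2 * (inverse t * \<delta>^(q+1)) + \<delta>" unfolding sqr using tnz by (simp add: field_simps)
      then show ?thesis using two by (simp add: u_def)
    qed
    have "Pinv y = y + b * u^(m+1)" using w by (simp add: Pinv_def t_def[symmetric] m_def add.commute)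
    also have "\<dots> = x + 2 * (b * s * u)" unfolding um y_eq by (simp add: algebra_simps)
    finally show ?thesis using two by (simp add: y_def)
  qed
  have injP: "inj P" by (metis injI key)
  have bijP: "bij P" using injP by (simp add: bij_def finite_UNIV_inj_surj)
  have "P (Pinv c) = c" for c
  proof -
    obtain x where "c = P x" using bijP by (metis bij_pointE)
    then show ?thesis using key by simp
  qed
  then show ?thesis using bijP key by simp
qed

end
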